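(* Let $K$ be a field, $\mathcal A$ a $K$-algebra and $V$ a $K$-subspace of $\mathcal A$. Then the following two statements are equivalent: (1) every element of $\sqrt V$ which is algebraic over $K$ is either nilpotent or invertible in $\mathcal A$; (2) $V$ contains no non-trivial idempotent of $\mathcal A$.
   Context: All algebras are associative with identity $1$ (not necessarily commutative). For a subset $S\subseteq\mathcal A$, the radical $\sqrt S$ is the set of $a\in\mathcal A$ such that $a^m\in S$ for all sufficiently large $m$. An idempotent is an element $e$ with $e^2=e$; it is non-trivial if $e\neq 0$ and $e\neq 1$. *)

theory Defs
  imports Main "HOL-Computational_Algebra.Polynomial"
begin

definition algebra_over :: "('k::field \<Rightarrow> 'a::ring_1 \<Rightarrow> 'a) \<Rightarrow> bool" where
  "algebra_over scale \<longleftrightarrow> module scale \<and>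
     (\<forall>c x y. scale c (x * y) = scale c x * y) \<and>
     (\<forall>c x y. scale c (x * y) = x * scale c y)"

definition poly_eval :: "('k::field \<Rightarrow> 'a::ring_1 \<Rightarrow> 'a) \<Rightarrow> 'k poly \<Rightarrow> 'a \<Rightarrow> 'a" where
  "poly_eval scale p a = (\<Sum>i\<le>degree p. scale (coeff p i) (a ^ i))"

definition algebraic_over :: "('k::field \<Rightarrow> 'a::ring_1 \<Rightarrow> 'a) \<Rightarrow> 'a \<Rightarrow> bool" where
  "algebraic_over scale a \<longleftrightarrow> (\<exists>p. p \<noteq> 0 \<and> poly_eval scale p a = 0)"

definition radical :: "'a::monoid_mult set \<Rightarrow> 'a set" where
  "radical S = {a. \<exists>N. \<forall>m\<ge>N. a ^ m \<in> S}"

definition nilpotent :: "'a::{zero,monoid_mult} \<Rightarrow> bool" where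
  "nilpotent a \<longleftrightarrow> (\<exists>n. a ^ n = 0)"

definition invertible_elem :: "'a::monoid_mult \<Rightarrow> bool" where
  "invertible_elem a \<longleftrightarrow> (\<exists>b. a * b = 1 \<and> b * a = 1)"

definition nontrivial_idempotent :: "'a::ring_1 \<Rightarrow> bool" where
  "nontrivial_idempotent e \<longleftrightarrow> e * e = e \<and> e \<noteq> 0 \<and> e \<noteq> 1"

end

theory Submission
  imports Defs
begin

lemma alg_module: "algebra_over scale \<Longrightarrow> module scale"
  by (simp add: algebra_over_def)

lemma ev_sum:
  assumes A: "algebra_over scale" and "degree p < n"
  shows "poly_eval scale p a = (\<Sum>i<n. scale (coeff p i) (a ^ i))"
proof -
  interpret m: module scale using alg_module[OF A] .
  have "poly_eval scale p a = (\<Sum>i<Suc (degree p). scale (coeff p i) (a ^ i))"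
    unfolding poly_eval_def by (simp add: lessThan_Suc_atMost)
  also have "\<dots> = (\<Sum>i<n. scale (coeff p i) (a ^ i))"
    by (rule sum.mono_neutral_left) (use assms in \<open>auto simp: coeff_eq_0\<close>)
  finally show ?thesis .
qed

lemma ev_pCons:
  assumes A: "algebra_over scale"
  shows "poly_eval scale (pCons c p) a = scale c 1 + a * poly_eval scale p a"
proof -
  interpret m: module scale using alg_module[OF A] .
  have ax: "\<And>c x y. scale c (x * y) = x * scale c y" using A unfolding algebra_over_def by blast
  have d: "degree (pCons c p) < Suc (Suc (degree p))"
    by (metis degree_pCons_le le_imp_less_Suc)
  have "poly_eval scale (pCons c p) a = (\<Sum>i<Suc (Suc (degree p)). scale (coeff (pCons c p) i) (a ^ i))"
    by (rule ev_sum[OF A d])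
  also have "\<dots> = scale c 1 + (\<Sum>i<Suc (degree p). scale (coeff p i) (a * a ^ i))"
    by (subst sum.lessThan_Suc_shift) simp
  also have "\<dots> = scale c 1 + a * (\<Sum>i<Suc (degree p). scale (coeff p i) (a ^ i))"
    by (simp add: ax sum_distrib_left del: sum.lessThan_Suc)
  also have "(\<Sum>i<Suc (degree p). scale (coeff p i) (a ^ i)) = poly_eval scale p a"
    by (rule ev_sum[OF A, symmetric]) simp
  finally show ?thesis .
qed

lemma ev_0: "algebra_over scale \<Longrightarrow> poly_eval scale 0 a = 0"
  using module.scale_zero_left[OF alg_module] by (simp add: poly_eval_def)

lemma ev_add:
  assumes A: "algebra_over scale"
  shows "poly_eval scale (p + q) a = poly_eval scale p a + poly_eval scale q a"
proof -
  interpret m: module scale using alg_module[OF A] .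
  define n where "n = Suc (max (degree p) (degree q))"
  have "degree (p + q) < n" unfolding n_def
    by (metis degree_add_le le_imp_less_Suc max.cobounded1 max.cobounded2)
  then show ?thesis
    using ev_sum[OF A, of p n] ev_sum[OF A, of q n] ev_sum[OF A, of "p+q" n]
    by (simp add: n_def m.scale_left_distrib sum.distrib)
qed

lemma ev_smult:
  assumes A: "algebra_over scale"
  shows "poly_eval scale (smult c p) a = scale c (poly_eval scale p a)"
proof (induction p)
  case 0
  then show ?case using ev_0[OF A] module.scale_zero_right[OF alg_module[OF A]] by simp
next
  case (pCons d p)
  interpret m: module scale using alg_module[OF A] .
  have ax: "\<And>c x y. scale c (x * y) = x * scale c y" using A unfolding algebra_over_def by blast
  show ?case using pCons by (simp add: ev_pCons[OF A] m.scale_right_distrib ax)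
qed

lemma ev_mult:
  assumes A: "algebra_over scale"
  shows "poly_eval scale (p * q) a = poly_eval scale p a * poly_eval scale q a"
proof (induction p)
  case 0
  then show ?case using ev_0[OF A] by simp
next
  case (pCons c p)
  interpret m: module scale using alg_module[OF A] .
  have ax: "\<And>c x y. scale c (x * y) = scale c x * y" using A unfolding algebra_over_def by blast
  have "poly_eval scale (pCons c p * q) a = scale c (poly_eval scale q a) + a * poly_eval scale (p * q) a"
    by (simp add: ev_add[OF A] ev_smult[OF A] ev_pCons[OF A])
  also have "\<dots> = (scale c 1 + a * poly_eval scale p a) * poly_eval scale q a"
    using pCons by (simp add: distrib_right mult.assoc ax[symmetric])
  finally show ?case by (simp add: ev_pCons[OF A])
qed

lemma ev_1: "algebra_over scale \<Longrightarrow> poly_eval scale 1 a = 1"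
  using ev_pCons[of scale 1 0 a] ev_0[of scale a] module.scale_one[OF alg_module]
  by (simp add: one_pCons)

lemma ev_X: "algebra_over scale \<Longrightarrow> poly_eval scale [:0,1:] a = a"
  using ev_pCons[of scale 0 "[:1:]" a] ev_1[of scale a] module.scale_zero_left[OF alg_module]
  by (simp add: one_pCons)

lemma ev_Xpow: "algebra_over scale \<Longrightarrow> poly_eval scale ([:0,1:] ^ k) a = a ^ k"
  proof (induction k)
  case 0 then show ?case by (simp add: ev_1)
next
  case (Suc k) then show ?case by (metis power_Suc ev_mult ev_X)
qed

lemma ev_comm:
  assumes A: "algebra_over scale"
  shows "poly_eval scale p a * poly_eval scale q a = poly_eval scale q a * poly_eval scale p a"
  by (metis A ev_mult mult.commute)

lemma Xpow_in_V:
  assumes A: "algebra_over scale" and S: "module.subspace scale V"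
    and N: "\<forall>m\<ge>N. a ^ m \<in> V"
  shows "a ^ N * poly_eval scale u a \<in> V"
proof -
  interpret m: module scale using alg_module[OF A] .
  have ax: "\<And>c x y. scale c (x * y) = x * scale c y" using A unfolding algebra_over_def by blast
  have sub: "0 \<in> V" "\<And>x y. x \<in> V \<Longrightarrow> y \<in> V \<Longrightarrow> x + y \<in> V" "\<And>c x. x \<in> V \<Longrightarrow> scale c x \<in> V"
    using S by (auto simp: m.subspace_def)
  have "a ^ N * poly_eval scale u a = (\<Sum>i\<le>degree u. scale (coeff u i) (a ^ (N + i)))"
    by (simp add: poly_eval_def sum_distrib_left ax[symmetric] power_add)
  also have "\<dots> \<in> V"
  proof -
    have "\<And>I. finite I \<Longrightarrow> (\<Sum>i\<in>I. scale (coeff u i) (a ^ (N + i))) \<in> V"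
    proof -
      fix I :: "nat set" assume "finite I"
      then show "(\<Sum>i\<in>I. scale (coeff u i) (a ^ (N + i))) \<in> V"
        by (induction I rule: finite_induct) (use sub N in auto)
    qed
    then show ?thesis by simp
  qed
  finally show ?thesis .
qed

lemma bezout_X:
  fixes q :: "'k::field poly"
  assumes nd: "\<not> [:0,1:] dvd q"
  shows "\<exists>u v. u * [:0,1:] ^ M + v * q = 1"
proof -
  obtain c r where q: "q = pCons c r" by (cases q) auto
  have c0: "c \<noteq> 0" using nd by (simp add: dvd_iff_poly_eq_0 q)
  define w where "w = smult (1/c) r"
  define t where "t = - ([:0,1:] * w)"
  have sq: "smult (1/c) q = 1 - t"
    using c0 by (simp add: q t_def w_def one_pCons smult_add_right)
  have "1 - t ^ M = (1 - t) * (\<Sum>i<M. t ^ i)" by (rule one_diff_power_eq)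
  also have "t ^ M = [:0,1:] ^ M * (- w) ^ M" by (simp add: t_def power_mult_distrib[symmetric])
  finally have "1 = (-w) ^ M * [:0,1:] ^ M + smult (1/c) (\<Sum>i<M. t ^ i) * q"
    by (simp add: sq[symmetric] algebra_simps)
  then show ?thesis by metis
qed

lemma idem_pow: "e * e = e \<Longrightarrow> m \<ge> 1 \<Longrightarrow> (e::'a::ring_1) ^ m = e"
proof (induction m)
  case (Suc m) then show ?case by (cases m) auto
qed simp

theorem theorem3p5:
  fixes scale :: "'k::field \<Rightarrow> 'a::ring_1 \<Rightarrow> 'a"
    and V :: "'a set"
  assumes "algebra_over scale"
    and "module.subspace scale V"
  shows "(\<forall>a\<in>radical V. algebraic_over scale a \<longrightarrow> nilpotent a \<or> invertible_elem a)
     \<longleftrightarrow> \<not> (\<exists>e\<in>V. nontrivial_idempotent e)"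
proof
  note A = assms(1)
  interpret m: module scale using alg_module[OF A] .
  assume H: "\<forall>a\<in>radical V. algebraic_over scale a \<longrightarrow> nilpotent a \<or> invertible_elem a"
  show "\<not> (\<exists>e\<in>V. nontrivial_idempotent e)"
  proof
    assume "\<exists>e\<in>V. nontrivial_idempotent e"
    then obtain e where eV: "e \<in> V" and ee: "e * e = e" and e0: "e \<noteq> 0" and e1: "e \<noteq> 1"
      by (auto simp: nontrivial_idempotent_def)
    have rad: "e \<in> radical V" unfolding radical_def
      using idem_pow[OF ee] eV by (intro CollectI exI[of _ 1]) auto
    define p where "p = [:0,1:] * [:0,1:] + smult (-1) [:0,(1::'k):]"
    have "p \<noteq> 0" unfolding p_def by simp
    moreover have "poly_eval scale p e = 0"
    proof -
      have "poly_eval scale p e = e * e + scale (-1) e"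
        unfolding p_def by (simp only: ev_add[OF A] ev_mult[OF A] ev_smult[OF A] ev_X[OF A])
      then show ?thesis using ee by (simp add: m.scale_minus_left)
    qed
    ultimately have "algebraic_over scale e" unfolding algebraic_over_def by blast
    with H rad have "nilpotent e \<or> invertible_elem e" by blast
    then show False
    proof
      assume "nilpotent e"
      then obtain n where n: "e ^ n = 0" by (auto simp: nilpotent_def)
      show False
      proof (cases n)
        case 0 then have "(1::'a) = 0" using n by simp
        then have "e = 0" by (metis mult_1_right mult_zero_right)
        then show False using e0 by simp
      next
        case (Suc k) then show False using n idem_pow[OF ee, of n] e0 by simp
      qed
    next
      assume "invertible_elem e"
      then obtain b where b: "e * b = 1" by (auto simp: invertible_elem_def)
      have "e = e * (e * b)" using b by simp
      also have "\<dots> = 1" using ee b by (metis mult.assoc)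
      finally show False using e1 by simp
    qed
  qed
next
  note A = assms(1)
  interpret m: module scale using alg_module[OF A] .
  assume H: "\<not> (\<exists>e\<in>V. nontrivial_idempotent e)"
  show "\<forall>a\<in>radical V. algebraic_over scale a \<longrightarrow> nilpotent a \<or> invertible_elem a"
  proof (intro ballI impI)
    fix a assume "a \<in> radical V" "algebraic_over scale a"
    then obtain N p where N: "\<forall>m\<ge>N. a ^ m \<in> V" and p0: "p \<noteq> 0" and pa: "poly_eval scale p a = 0"
      by (auto simp: radical_def algebraic_over_def)
    define ev where "ev p = poly_eval scale p a" for p
    obtain q where pq: "p = [:0,1:] ^ order 0 p * q" and nd: "\<not> [:0,1:] dvd q"
      using order_decomp[OF p0, of 0] by auto
    define k where "k = order 0 p"
    define M where "M = Suc (max N k)"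
    have NM: "\<forall>m\<ge>M. a ^ m \<in> V" using N by (auto simp: M_def)
    obtain u v where uv: "u * [:0,1::'k:] ^ M + v * q = 1"
      using bezout_X[OF nd] by blast
    define e where "e = a ^ M * ev u"
    have eev: "e = ev (u * [:0,1:] ^ M)"
      unfolding e_def ev_def by (simp add: ev_mult[OF A] ev_Xpow[OF A] ev_comm[OF A, of _ _ "[:0,1:] ^ M", simplified ev_Xpow[OF A]])
    have eV: "e \<in> V" unfolding e_def ev_def
      using Xpow_in_V[OF A assms(2), of M a u] NM by simp
    have sum1: "e + ev (v * q) = 1" unfolding eev ev_def
      using uv ev_add[OF A] ev_1[OF A] by metis
    have "u * [:0,1:] ^ M * (v * q) = (u * v * [:0,1:] ^ (M - k)) * p"
    proof -
      have "[:0,1::'k:] ^ M = [:0,1:] ^ (M - k) * [:0,1:] ^ k"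
        by (simp add: M_def power_add[symmetric])
      then show ?thesis using pq by (simp add: k_def algebra_simps)
    qed
    then have prod0: "e * ev (v * q) = 0" unfolding eev ev_def
      by (metis ev_mult[OF A] pa mult_zero_right)
    have ee: "e * e = e"
    proof -
      have "e * e = e * (1 - ev (v * q))" using sum1 by (metis add_diff_cancel_right')
      also have "\<dots> = e" using prod0 by (simp add: right_diff_distrib)
      finally show ?thesis .
    qed
    with H eV have "e = 0 \<or> e = 1" by (auto simp: nontrivial_idempotent_def)
    then show "nilpotent a \<or> invertible_elem a"
    proof
      assume "e = 0"
      then have vq: "ev (v * q) = 1" using sum1 by simp
      have "a ^ k = a ^ k * ev (v * q)" using vq by simp
      also have "\<dots> = ev ([:0,1:] ^ k * q * v)"
        unfolding ev_def by (simp add: ev_mult[OF A] ev_Xpow[OF A] ev_comm[OF A, of v _ q] mult.assoc)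
      also have "\<dots> = 0" unfolding ev_def using pq pa ev_mult[OF A] k_def
        by (metis mult_zero_left)
      finally show ?thesis by (auto simp: nilpotent_def)
    next
      assume "e = 1"
      then have e1: "a ^ M * ev u = 1" by (simp add: e_def)
      have cu: "ev u * a = a * ev u" unfolding ev_def
        using ev_comm[OF A, of u a "[:0,1:]"] by (simp add: ev_X[OF A])
      define b where "b = a ^ (M - 1) * ev u"
      have aM: "a ^ M = a * a ^ (M - 1)" by (simp add: M_def)
      have "a * b = 1" using e1 aM by (simp add: b_def mult.assoc)
      moreover have "b * a = 1" using e1 cu
        by (metis b_def mult.assoc power_commutes aM)
      ultimately show ?thesis by (auto simp: invertible_elem_def)
    qed
  qed
qed

end
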